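(* Let $\mathcal U$ be a finite nonempty set, let $\epsilon_1,\epsilon_2\in(0,1]$ and let $F_a,F_b\ge1$ be integers. For $p\in[\max\{\epsilon_1,\epsilon_2\},1]$ and nonnegative integer vectors $a=(a_v)_{v\in\mathcal U}$, $b=(b_v)_{v\in\mathcal U}$, let $$V(p;a,b)=\Big(\frac1p-1\Big)\gamma_{2,2}+\Big(\frac1{\epsilon_2}-\frac1p\Big)\gamma_{2,1}+\Big(\frac1{\epsilon_1}-\frac1p\Big)\gamma_{1,2}+\Big(\frac{p}{\epsilon_1\epsilon_2}-\frac1{\epsilon_1}-\frac1{\epsilon_2}+\frac1p\Big)\gamma_{1,1},\quad \gamma_{i,j}=\sum_v a_v^ib_v^j,$$ which is the variance of the COUNT join estimator under UBS parameters $(p,\epsilon_1/p)$ and $(p,\epsilon_2/p)$. Then the value of $p\in[\max\{\epsilon_1,\epsilon_2\},1]$ minimizing the worst-case variance $\max\{V(p;a,b): 0\le a_v\le F_a,\ 0\le b_v\le F_b \text{ for all } v\}$ is $$p=\min\Big\{1,\max\Big\{\epsilon_1,\epsilon_2,\sqrt{\epsilon_1\epsilon_2(F_aF_b-F_a-F_b+1)}\Big\}\Big\},$$ with corresponding uniform sampling rates $q_1=\epsilon_1/p$, $q_2=\epsilon_2/p$.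
   Context: Setting: two tables $T_1,T_2$ joined on a column $J$ with values in $\mathcal U$ are held by different parties; $a_v$, $b_v$ are the numbers of tuples of $T_1$, $T_2$ with $J$-value $v$, and the only information about the frequency vectors used is the maximum frequencies $F_a=\max_v a_v$ and $F_b=\max_v b_v$. Both tables use universe-Bernoulli sampling with the same universe rate $p$ (each tuple whose hashed join value is below $p$ is kept independently with probability $q_i$), with effective sampling rates $pq_i=\epsilon_i$; the COUNT estimator is $|S_1\bowtie S_2|/(pq_1q_2)$, whose variance equals $V(p;a,b)$ above. *)

theory Defs
  imports Complex_Main
begin

definition gamma :: "'a set \<Rightarrow> ('a \<Rightarrow> nat) \<Rightarrow> ('a \<Rightarrow> nat) \<Rightarrow> nat \<Rightarrow> nat \<Rightarrow> real" where
  "gamma U a b i j = (\<Sum>v\<in>U. real (a v) ^ i * real (b v) ^ j)"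

definition join_var :: "'a set \<Rightarrow> real \<Rightarrow> real \<Rightarrow> real \<Rightarrow> ('a \<Rightarrow> nat) \<Rightarrow> ('a \<Rightarrow> nat) \<Rightarrow> real" where
  "join_var U e1 e2 p a b =
     (1/p - 1) * gamma U a b 2 2
   + (1/e2 - 1/p) * gamma U a b 2 1
   + (1/e1 - 1/p) * gamma U a b 1 2
   + (p/(e1*e2) - 1/e1 - 1/e2 + 1/p) * gamma U a b 1 1"

definition worst_var :: "'a set \<Rightarrow> real \<Rightarrow> real \<Rightarrow> nat \<Rightarrow> nat \<Rightarrow> real \<Rightarrow> real" where
  "worst_var U e1 e2 Fa Fb p =
     Max {join_var U e1 e2 p a b | a b. \<forall>v\<in>U. a v \<le> Fa \<and> b v \<le> Fb}"

end

theory Submission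
  imports Defs "HOL-Library.FuncSet"
begin

lemma key_ineq:
  fixes m K E p s :: real
  assumes "0 < m" "m \<le> 1" "0 \<le> K" "0 < E"
    and s: "s = min 1 (max m (sqrt (K*E)))" and "m \<le> p" "p \<le> 1" "p \<noteq> s"
  shows "(p - s) * (p * s - K * E) > 0"
proof -
  define r where "r = sqrt (K*E)"
  have r0: "r \<ge> 0" and r2: "r^2 = K*E" using assms by (auto simp: r_def)
  consider "r \<le> m" | "m < r" "r \<le> 1" | "1 < r" by linarith
  then show ?thesis
  proof cases
    case 1
    then have sm: "s = m" using s assms r_def by auto
    have "r^2 \<le> m^2" using 1 r0 by (simp add: power_mono)
    have "p > m" using sm assms by auto
    have "p*m > m*m" using \<open>p > m\<close> assms by simp
    then have "p*s - K*E > 0" using sm r2 \<open>r^2 \<le> m^2\<close> by (simp add: power2_eq_square)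
    moreover have "p - s > 0" using sm \<open>p > m\<close> by simp
    ultimately show ?thesis by simp
  next
    case 2
    then have sr: "s = r" using s r_def by auto
    have "(p - s) * (p * s - K * E) = r * (p - r)^2" using sr r2 by (simp add: power2_eq_square algebra_simps)
    moreover have "r > 0" using 2 assms by linarith
    moreover have "(p-r)^2 > 0" using sr assms by simp
    ultimately show ?thesis by simp
  next
    case 3
    have h: "1 < sqrt (K*E)" using 3 r_def by simp
    have "max m (sqrt(K*E)) = sqrt(K*E)" using h assms(2) by (intro max_absorb2) linarith
    moreover have "min 1 (sqrt(K*E)) = 1" using h by (intro min_absorb1) linarith
    ultimately have s1: "s = 1" using s by simp
    have "K*E > 1" using 3 r2 r0 by (metis less_1_mult power2_eq_square)
    have "p < 1" using s1 assms by simp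
    have "p - s < 0" "p*s - K*E < 0" using s1 \<open>p<1\<close> \<open>K*E>1\<close> by auto
    then show ?thesis by (simp add: mult_neg_neg)
  qed
qed

lemma gamma_const: "gamma U (\<lambda>_. Fa) (\<lambda>_. Fb) i j = real (card U) * (real Fa ^ i * real Fb ^ j)"
  by (simp add: gamma_def)

lemma mono_term:
  fixes a b Fa Fb :: nat
  assumes "a \<le> Fa" "b \<le> Fb"
  shows "real a ^ i * real b ^ j \<le> real Fa ^ i * real Fb ^ j"
  using assms by (intro mult_mono power_mono) auto

lemma worst_eq:
  fixes U :: "'a set" and e1 e2 p :: real and Fa Fb :: nat
  assumes "finite U" "0 < e1" "0 < e2" "max e1 e2 \<le> p" "p \<le> 1"
  shows "worst_var U e1 e2 Fa Fb p = join_var U e1 e2 p (\<lambda>_. Fa) (\<lambda>_. Fb)"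
proof -
  let ?S = "{join_var U e1 e2 p a b | a b. \<forall>v\<in>U. a v \<le> Fa \<and> b v \<le> Fb}"
  have p0: "p > 0" using assms by linarith
  have c1: "1/p - 1 \<ge> 0" using p0 assms by simp
  have c2: "1/e2 - 1/p \<ge> 0" using assms p0 by (simp add: frac_le)
  have c3: "1/e1 - 1/p \<ge> 0" using assms p0 by (simp add: frac_le)
  have c4eq: "p/(e1*e2) - 1/e1 - 1/e2 + 1/p = (p-e1)*(p-e2)/(p*e1*e2)"
    using assms p0 by (simp add: field_simps)
  have c4: "p/(e1*e2) - 1/e1 - 1/e2 + 1/p \<ge> 0"
    unfolding c4eq using assms p0 by (intro divide_nonneg_pos mult_nonneg_nonneg) auto
  have jv: "join_var U e1 e2 p a b = (\<Sum>v\<in>U.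
      (1/p - 1) * (real (a v)^2 * real (b v)^2)
    + (1/e2 - 1/p) * (real (a v)^2 * real (b v)^1)
    + (1/e1 - 1/p) * (real (a v)^1 * real (b v)^2)
    + (p/(e1*e2) - 1/e1 - 1/e2 + 1/p) * (real (a v)^1 * real (b v)^1))" for a b
    unfolding join_var_def gamma_def by (simp add: sum_distrib_left sum.distrib)
  have le: "join_var U e1 e2 p a b \<le> join_var U e1 e2 p (\<lambda>_. Fa) (\<lambda>_. Fb)"
    if "\<forall>v\<in>U. a v \<le> Fa \<and> b v \<le> Fb" for a b
    unfolding jv
  proof (rule sum_mono)
    fix v assume "v \<in> U"
    then have h: "a v \<le> Fa" "b v \<le> Fb" using that by auto
    show "(1/p - 1) * (real (a v)^2 * real (b v)^2)
    + (1/e2 - 1/p) * (real (a v)^2 * real (b v)^1)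
    + (1/e1 - 1/p) * (real (a v)^1 * real (b v)^2)
    + (p/(e1*e2) - 1/e1 - 1/e2 + 1/p) * (real (a v)^1 * real (b v)^1)
    \<le> (1/p - 1) * (real Fa^2 * real Fb^2)
    + (1/e2 - 1/p) * (real Fa^2 * real Fb^1)
    + (1/e1 - 1/p) * (real Fa^1 * real Fb^2)
    + (p/(e1*e2) - 1/e1 - 1/e2 + 1/p) * (real Fa^1 * real Fb^1)"
      by (intro add_mono mult_left_mono mono_term h c1 c2 c3 c4)
  qed
  have fin: "finite ?S"
  proof -
    let ?A = "PiE U (\<lambda>_. {..Fa}) \<times> PiE U (\<lambda>_. {..Fb})"
    have "?S \<subseteq> (\<lambda>(a,b). join_var U e1 e2 p a b) ` ?A"
    proof
      fix x assume "x \<in> ?S"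
      then obtain a b where x: "x = join_var U e1 e2 p a b" and ab: "\<forall>v\<in>U. a v \<le> Fa \<and> b v \<le> Fb" by blast
      have "x = join_var U e1 e2 p (restrict a U) (restrict b U)"
        unfolding x join_var_def gamma_def by (simp add: restrict_def)
      moreover have "(restrict a U, restrict b U) \<in> ?A" using ab by auto
      ultimately show "x \<in> (\<lambda>(a,b). join_var U e1 e2 p a b) ` ?A" by force
    qed
    moreover have "finite ?A" using assms(1) by (simp add: finite_PiE)
    ultimately show ?thesis by (meson finite_imageI finite_subset)
  qed
  show ?thesis unfolding worst_var_def
    by (rule Max_eqI[OF fin]) (use le in auto)
qed

theorem theorem6:
  fixes U :: "'a set" and e1 e2 :: real and Fa Fb :: nat
  assumes "finite U" and "U \<noteq> {}"
    and "0 < e1" and "e1 \<le> 1" and "0 < e2" and "e2 \<le> 1"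
    and "1 \<le> Fa" and "1 \<le> Fb"
  defines "pstar \<equiv> min 1 (max (max e1 e2)
             (sqrt (e1 * e2 * (real Fa * real Fb - real Fa - real Fb + 1))))"
  shows "pstar \<in> {max e1 e2..1}
    \<and> (\<forall>p\<in>{max e1 e2..1}. worst_var U e1 e2 Fa Fb pstar \<le> worst_var U e1 e2 Fa Fb p)
    \<and> (\<forall>p\<in>{max e1 e2..1}. worst_var U e1 e2 Fa Fb p \<le> worst_var U e1 e2 Fa Fb pstar \<longrightarrow> p = pstar)"
proof -
  define m where "m = max e1 e2"
  define K where "K = (real Fa - 1) * (real Fb - 1)"
  define E where "E = e1 * e2"
  define D where "D = real Fa * real Fb"
  have m0: "0 < m" "m \<le> 1" using assms by (auto simp: m_def)
  have K0: "K \<ge> 0" using assms by (simp add: K_def)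
  have E0: "E > 0" using assms by (simp add: E_def)
  have D0: "D > 0" using assms by (simp add: D_def)
  have ps: "pstar = min 1 (max m (sqrt (K*E)))"
    unfolding pstar_def m_def K_def E_def by (simp add: algebra_simps)
  have pin: "pstar \<in> {m..1}" using ps m0 by auto
  define c where "c = real (card U)"
  have c0: "c > 0" using assms by (simp add: c_def card_gt_0_iff)
  have W: "worst_var U e1 e2 Fa Fb p = c * D * (K/p + p/E) + c * (- D*D + D * real Fa / e2 + D * real Fb / e1 - D/e1 - D/e2)"
    if "p \<in> {m..1}" for p
  proof -
    have p0: "p > 0" using that m0 by auto
    have j: "worst_var U e1 e2 Fa Fb p = c * ((1/p - 1) * (D*D) + (1/e2 - 1/p) * (D*real Fa)
        + (1/e1 - 1/p) * (D * real Fb) + (p/E - 1/e1 - 1/e2 + 1/p) * D)"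
    proof -
      have q: "max e1 e2 \<le> p" "p \<le> 1" using that m_def by auto
      show ?thesis unfolding worst_eq[OF assms(1) assms(3) assms(5) q]
      by (simp add: m_def join_var_def gamma_const E_def D_def c_def power2_eq_square algebra_simps)
    qed
    have k: "K/p = (real Fa * real Fb - real Fa - real Fb + 1) * (1/p)" by (simp add: K_def algebra_simps divide_inverse)
    show ?thesis unfolding j k using p0
      by (simp add: D_def divide_inverse algebra_simps)
  qed
  have diff: "worst_var U e1 e2 Fa Fb p - worst_var U e1 e2 Fa Fb pstar
      = c * D * ((p - pstar) * (p * pstar - K * E) / (p * pstar * E))"
    if "p \<in> {m..1}" for p
  proof -
    have "p > 0" "pstar > 0" using that pin m0 by auto
    then show ?thesis unfolding W[OF that] W[OF pin] using E0
      by (simp add: field_simps)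
  qed
  have pos: "worst_var U e1 e2 Fa Fb p - worst_var U e1 e2 Fa Fb pstar > 0"
    if "p \<in> {m..1}" "p \<noteq> pstar" for p
  proof -
    have "(p - pstar) * (p * pstar - K * E) > 0"
      using key_ineq[OF m0 K0 E0 ps] that by auto
    moreover have "p * pstar * E > 0" using that pin m0 E0 by auto
    ultimately show ?thesis unfolding diff[OF that(1)] using c0 D0 by simp
  qed
  show ?thesis
  proof (intro conjI ballI impI)
    show "pstar \<in> {max e1 e2..1}" using pin m_def by simp
  next
    fix p assume "p \<in> {max e1 e2..1}"
    then have "p \<in> {m..1}" by (simp add: m_def)
    then show "worst_var U e1 e2 Fa Fb pstar \<le> worst_var U e1 e2 Fa Fb p"
      using pos by (cases "p = pstar") (auto, fastforce)
  next
    fix p assume "p \<in> {max e1 e2..1}" "worst_var U e1 e2 Fa Fb p \<le> worst_var U e1 e2 Fa Fb pstar"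
    then show "p = pstar" using pos[of p] by (auto simp: m_def)
  qed
qed

end
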